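(* Let $B_3=\langle\sigma_1,\sigma_2\mid\sigma_1\sigma_2\sigma_1=\sigma_2\sigma_1\sigma_2\rangle$, $\Delta=\sigma_1\sigma_2\sigma_1$, and let $<_{DD}$ be the Dubrovina–Dubrovin ordering. Then for every braid $\beta\in B_3$ and every integer $k$, \[\Delta^{-2}<_{DD}\beta^{-1}\sigma_2^k\beta<_{DD}\Delta^2.\]
   Context: A word in $\sigma_1^{\pm1},\sigma_2^{\pm1}$ is 1-positive if $\sigma_1$ occurs in it and only with positive exponents. The Dubrovina–Dubrovin left-ordering $<_{DD}$ of $B_3$ has positive cone consisting of those $\beta\in B_3$ that admit a 1-positive representative word, together with the elements $\sigma_2^k$ for $k<0$. *)

theory Defs
  imports Main
begin

datatype gen = S1 | S2

text \<open>A letter (g, True) is g, a letter (g, False) is g^(-1).\<close>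
type_synonym bword = "(gen \<times> bool) list"

definition inv_word :: "bword \<Rightarrow> bword" where
  "inv_word w = rev (map (\<lambda>(g, e). (g, \<not> e)) w)"

inductive braid_step :: "bword \<Rightarrow> bword \<Rightarrow> bool" where
  cancel: "braid_step (u @ [(g, e), (g, \<not> e)] @ v) (u @ v)"
| braid_rel: "braid_step (u @ [(S1, True), (S2, True), (S1, True)] @ v)
                         (u @ [(S2, True), (S1, True), (S2, True)] @ v)"

definition braid_eq :: "bword \<Rightarrow> bword \<Rightarrow> bool" where
  "braid_eq = equivclp braid_step"

definition one_positive :: "bword \<Rightarrow> bool" where
  "one_positive w \<longleftrightarrow> (S1, True) \<in> set w \<and> (S1, False) \<notin> set w"

definition sigma2_pow :: "int \<Rightarrow> bword" where
  "sigma2_pow k = (if k \<ge> 0 then replicate (nat k) (S2, True)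
                   else replicate (nat (- k)) (S2, False))"

definition DD_pos :: "bword \<Rightarrow> bool" where
  "DD_pos w \<longleftrightarrow> (\<exists>v. braid_eq w v \<and> one_positive v) \<or>
               (\<exists>k::int. k < 0 \<and> braid_eq w (sigma2_pow k))"

definition DD_less :: "bword \<Rightarrow> bword \<Rightarrow> bool" where
  "DD_less a b \<longleftrightarrow> DD_pos (inv_word a @ b)"

definition Delta :: bword where
  "Delta = [(S1, True), (S2, True), (S1, True)]"

end

theory Submission imports Defs begin

abbreviation "la \<equiv> (S1, True)"
abbreviation "lA \<equiv> (S1, False)"
abbreviation "lb \<equiv> (S2, True)"
abbreviation "lB \<equiv> (S2, False)"

lemma beq_refl[simp]: "braid_eq x x"
  unfolding braid_eq_def by (simp add: equivclp_def)
lemma beq_sym: "braid_eq x y \<Longrightarrow> braid_eq y x"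
  unfolding braid_eq_def by (rule equivclp_sym)
lemma beq_trans[trans]: "braid_eq x y \<Longrightarrow> braid_eq y z \<Longrightarrow> braid_eq x z"
  unfolding braid_eq_def by (meson transpD transp_equivclp)

lemma step_ctxt: "braid_step u v \<Longrightarrow> braid_step (x@u@y) (x@v@y)"
proof (induction rule: braid_step.induct)
  case (cancel u g e v)
  show ?case using braid_step.cancel[of "x@u" g e "v@y"] by simp
next
  case (braid_rel u v)
  show ?case using braid_step.braid_rel[of "x@u" "v@y"] by simp
qed

lemma beq_ctxt: "braid_eq u v \<Longrightarrow> braid_eq (x@u@y) (x@v@y)"
  unfolding braid_eq_def
proof (induction rule: equivclp_induct)
  case base then show ?case by (simp add: equivclp_def)
next
  case (step y' z)
  have "equivclp braid_step (x@y'@y) (x@z@y)"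
    using step(2) step_ctxt
    by (metis equivclp_sym r_into_rtranclp rtranlcp_le_equivclp predicate2D)
  then show ?case using step(3) by (meson transpD transp_equivclp)
qed

lemma beq_app: "braid_eq u u' \<Longrightarrow> braid_eq v v' \<Longrightarrow> braid_eq (u@v) (u'@v')"
  using beq_ctxt[of u u' "[]" v] beq_ctxt[of v v' u' "[]"] by (auto intro: beq_trans)

lemma beq_step: "braid_step u v \<Longrightarrow> braid_eq u v"
  unfolding braid_eq_def
  by (metis r_into_rtranclp rtranlcp_le_equivclp predicate2D)

lemma cancel0: "braid_eq [(g,e),(g,\<not>e)] []"
  using beq_step[OF braid_step.cancel[of "[]" g e "[]"]] by simp

lemma cancel1: "braid_eq (x@[(g,e),(g,\<not>e)]@y) (x@y)"
  using beq_ctxt[OF cancel0[of g e], of x y] by simp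

lemma brel0: "braid_eq [la,lb,la] [lb,la,lb]"
  using beq_step[OF braid_step.braid_rel[of "[]" "[]"]] by simp

lemma inv_word_simps[simp]:
  "inv_word [] = []" "inv_word (x@y) = inv_word y @ inv_word x"
  "inv_word ((g,e)#w) = inv_word w @ [(g,\<not>e)]"
  "inv_word (inv_word w) = w"
  by (auto simp: inv_word_def rev_map comp_def case_prod_beta)

lemma inv_right: "braid_eq (w @ inv_word w) []"
proof (induction w)
  case Nil then show ?case by simp
next
  case (Cons s w)
  obtain g e where s: "s = (g,e)" by force
  have "braid_eq ([s] @ (w @ inv_word w) @ [(g,\<not>e)]) ([s] @ [] @ [(g,\<not>e)])"
    by (rule beq_ctxt[OF Cons.IH])
  also have "braid_eq ([s] @ [] @ [(g,\<not>e)]) []" using cancel0 s by simp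
  finally show ?case using s by simp
qed

lemma inv_left: "braid_eq (inv_word w @ w) []"
  using inv_right[of "inv_word w"] by simp

lemma beq_inv: "braid_eq x y \<Longrightarrow> braid_eq (inv_word x) (inv_word y)"
proof -
  assume h: "braid_eq x y"
  have "braid_eq (inv_word x) (inv_word x @ (y @ inv_word y) @ [])"
    using beq_ctxt[OF inv_right[of y], of "inv_word x" "[]"] beq_sym by simp
  also have "braid_eq (inv_word x @ (y @ inv_word y) @ []) (inv_word x @ (x @ inv_word y) @ [])"
    using beq_ctxt[OF beq_ctxt[OF beq_sym[OF h], of "[]" "inv_word y"], of "inv_word x" "[]"] by simp
  also have "braid_eq (inv_word x @ (x @ inv_word y) @ []) ([] @ [] @ inv_word y)"
    using beq_ctxt[OF inv_left[of x], of "[]" "inv_word y"] by simp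
  finally show ?thesis by simp
qed


fun sw :: "gen \<Rightarrow> gen" where "sw S1 = S2" | "sw S2 = S1"
definition fl :: "gen \<times> bool \<Rightarrow> gen \<times> bool" where "fl s = (sw (fst s), snd s)"
definition flipw :: "bword \<Rightarrow> bword" where "flipw w = map fl w"

lemma sw_sw[simp]: "sw (sw g) = g" by (cases g) auto
lemma flipw_simps[simp]: "flipw [] = []" "flipw (x@y) = flipw x @ flipw y"
  "flipw (s#w) = fl s # flipw w" "flipw (flipw w) = w"
  by (auto simp: flipw_def fl_def comp_def)
lemma fl_simps[simp]: "fl (g,e) = (sw g, e)" by (simp add: fl_def)

definition Dl :: bword where "Dl = [la,lb,la]"

lemma letter_D: "braid_eq ([s] @ Dl) (Dl @ [fl s])"
proof -
  obtain g e where s: "s = (g,e)" by force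
  show ?thesis
  proof (cases g; cases e)
    assume "g = S1" "e"
    then show ?thesis using beq_ctxt[OF brel0, of "[la]" "[]"] s by (simp add: Dl_def)
  next
    assume "g = S1" "\<not>e"
    then have "braid_eq ([s] @ Dl) [lb,la]" using cancel1[of "[]" S1 False "[lb,la]"] s by (simp add: Dl_def)
    moreover have "braid_eq (Dl @ [fl s]) [lb,la]"
    proof -
      have "braid_eq (Dl @ [fl s]) ([lb,la,lb] @ [lB])"
        using beq_ctxt[OF brel0, of "[]" "[lB]"] \<open>g = S1\<close> \<open>\<not>e\<close> s by (simp add: Dl_def)
      also have "braid_eq ([lb,la,lb] @ [lB]) [lb,la]" using cancel1[of "[lb,la]" S2 True "[]"] by simp
      finally show ?thesis .
    qed
    ultimately show ?thesis by (meson beq_sym beq_trans)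
  next
    assume "g = S2" "e"
    then show ?thesis using beq_ctxt[OF beq_sym[OF brel0], of "[]" "[la]"] s by (simp add: Dl_def)
  next
    assume "g = S2" "\<not>e"
    have "braid_eq ([s] @ Dl) ([lB] @ [lb,la,lb])"
      using beq_ctxt[OF brel0, of "[lB]" "[]"] \<open>g = S2\<close> \<open>\<not>e\<close> s by (simp add: Dl_def)
    also have "braid_eq ([lB] @ [lb,la,lb]) [la,lb]" using cancel1[of "[]" S2 False "[la,lb]"] by simp
    finally have 1: "braid_eq ([s] @ Dl) [la,lb]" .
    have "braid_eq (Dl @ [fl s]) [la,lb]" using cancel1[of "[la,lb]" S1 True "[]"] \<open>g = S2\<close> \<open>\<not>e\<close> s
      by (simp add: Dl_def)
    then show ?thesis using 1 by (meson beq_sym beq_trans)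
  qed
qed

lemma word_D: "braid_eq (w @ Dl) (Dl @ flipw w)"
proof (induction w)
  case Nil then show ?case by simp
next
  case (Cons s w)
  have "braid_eq (s # w @ Dl) (s # Dl @ flipw w)" using beq_ctxt[OF Cons.IH, of "[s]" "[]"] by simp
  also have "braid_eq (s # Dl @ flipw w) (Dl @ fl s # flipw w)"
    using beq_ctxt[OF letter_D[of s], of "[]" "flipw w"] by simp
  finally show ?case by simp
qed

lemma D_word: "braid_eq (Dl @ w) (flipw w @ Dl)"
  using beq_sym[OF word_D[of "flipw w"]] by simp

lemma iD_word: "braid_eq (inv_word Dl @ w) (flipw w @ inv_word Dl)"
proof -
  have "braid_eq (inv_word Dl @ w) (inv_word Dl @ w @ (Dl @ inv_word Dl))"
    using beq_ctxt[OF beq_sym[OF inv_right[of Dl]], of "inv_word Dl @ w" "[]"] by simp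
  also have "braid_eq (inv_word Dl @ w @ Dl @ inv_word Dl) (inv_word Dl @ Dl @ flipw w @ inv_word Dl)"
    using beq_ctxt[OF word_D[of w], of "inv_word Dl" "inv_word Dl"] by simp
  also have "braid_eq (inv_word Dl @ Dl @ flipw w @ inv_word Dl) (flipw w @ inv_word Dl)"
    using beq_ctxt[OF inv_left[of Dl], of "[]" "flipw w @ inv_word Dl"] by simp
  finally show ?thesis by simp
qed

lemma word_iD: "braid_eq (w @ inv_word Dl) (inv_word Dl @ flipw w)"
  using beq_sym[OF iD_word[of "flipw w"]] by simp

lemma DD_central: "braid_eq (Dl @ Dl @ x) (x @ Dl @ Dl)"
proof -
  have "braid_eq (Dl @ Dl @ x) (Dl @ flipw x @ Dl)" using beq_ctxt[OF D_word[of x], of Dl "[]"] by simp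
  also have "braid_eq (Dl @ flipw x @ Dl) (x @ Dl @ Dl)"
    using beq_ctxt[OF beq_sym[OF word_D[of x]], of "[]" Dl] by simp
  finally show ?thesis by simp
qed

lemma conj_eq: "braid_eq x y \<Longrightarrow> braid_eq (inv_word x @ P @ x) (inv_word y @ P @ y)"
  by (simp add: beq_app beq_inv)

lemma conj_D: "braid_eq (inv_word (Dl @ y) @ P @ Dl @ y) (inv_word y @ flipw P @ y)"
proof -
  have "braid_eq (inv_word Dl @ P @ Dl) (flipw P @ inv_word Dl @ Dl)"
    using beq_ctxt[OF iD_word[of P], of "[]" Dl] by simp
  also have "braid_eq (flipw P @ inv_word Dl @ Dl) (flipw P)"
    using beq_ctxt[OF inv_left[of Dl], of "flipw P" "[]"] by simp
  finally have "braid_eq (inv_word Dl @ P @ Dl) (flipw P)" by simp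
  from beq_ctxt[OF this, of "inv_word y" y] show ?thesis by simp
qed

lemma conj_iD: "braid_eq (inv_word (inv_word Dl @ y) @ P @ inv_word Dl @ y) (inv_word y @ flipw P @ y)"
proof -
  have "braid_eq (Dl @ P @ inv_word Dl) (flipw P @ Dl @ inv_word Dl)"
    using beq_ctxt[OF D_word[of P], of "[]" "inv_word Dl"] by simp
  also have "braid_eq (flipw P @ Dl @ inv_word Dl) (flipw P)"
    using beq_ctxt[OF inv_right[of Dl], of "flipw P" "[]"] by simp
  finally have "braid_eq (Dl @ P @ inv_word Dl) (flipw P)" by simp
  from beq_ctxt[OF this, of "inv_word y" y] show ?thesis by simp
qed


definition pw :: "gen \<Rightarrow> int \<Rightarrow> bword" where
  "pw c k = (if k \<ge> 0 then replicate (nat k) (c, True) else replicate (nat (- k)) (c, False))"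

lemma flip_pw[simp]: "flipw (pw c k) = pw (sw c) k"
  by (simp add: pw_def flipw_def)
lemma set_pw: "set (pw c k) \<subseteq> {(c,True),(c,False)}"
  by (auto simp: pw_def)
lemma sigma2_pw: "sigma2_pow k = pw S2 k" by (simp add: sigma2_pow_def pw_def)
lemma inv_sigma2: "inv_word (sigma2_pow k) = sigma2_pow (- k)"
  by (auto simp: sigma2_pow_def inv_word_def)

definition Mp :: "bword \<Rightarrow> bool" where "Mp v \<longleftrightarrow> set v \<subseteq> {la, lB}"
definition Mm :: "bword \<Rightarrow> bool" where "Mm v \<longleftrightarrow> set v \<subseteq> {lA, lb}"

lemma Mp_flip: "Mp u \<Longrightarrow> Mm (flipw u)" by (auto simp: Mp_def Mm_def flipw_def fl_def)
lemma Mm_flip: "Mm u \<Longrightarrow> Mp (flipw u)" by (auto simp: Mp_def Mm_def flipw_def fl_def)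

lemma conjD': "braid_eq z (Dl @ y) \<Longrightarrow> braid_eq (inv_word z @ pw c k @ z) (inv_word y @ pw (sw c) k @ y)"
  using conj_eq[of z "Dl@y" "pw c k"] conj_D[of y "pw c k"] by (auto intro: beq_trans)
lemma conjiD': "braid_eq z (inv_word Dl @ y) \<Longrightarrow> braid_eq (inv_word z @ pw c k @ z) (inv_word y @ pw (sw c) k @ y)"
  using conj_eq[of z "inv_word Dl@y" "pw c k"] conj_iD[of y "pw c k"] by (auto intro: beq_trans)

lemma w1: "braid_eq (u@[la,lb]) (Dl @ flipw u @ [lA])"
proof -
  have "braid_eq (u@[la,lb]) (u @ Dl @ [lA])"
    using beq_sym[OF cancel1[of "u@[la,lb]" S1 True "[]"]] by (simp add: Dl_def)
  also have "braid_eq (u @ Dl @ [lA]) (Dl @ flipw u @ [lA])"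
    using beq_ctxt[OF word_D[of u], of "[]" "[lA]"] by simp
  finally show ?thesis .
qed

lemma w2: "braid_eq (u@[lB,lA]) (inv_word Dl @ flipw u @ [lb])"
proof -
  have "braid_eq (u@[lB,lA]) ((u @ [la]) @ inv_word Dl)"
    using beq_sym[OF cancel1[of "u" S1 True "[lB,lA]"]] by (simp add: Dl_def)
  also have "braid_eq ((u @ [la]) @ inv_word Dl) (inv_word Dl @ flipw u @ [lb])"
    using word_iD[of "u@[la]"] by simp
  finally show ?thesis .
qed


lemma w3: "braid_eq (u@[lb,la]) (Dl @ flipw u @ [lB])"
proof -
  have "braid_eq (u@[lb,la]) (u @ [lb,la,lb,lB])"
    using beq_sym[OF cancel1[of "u@[lb,la]" S2 True "[]"]] by simp
  also have "braid_eq (u @ [lb,la,lb,lB]) (u @ Dl @ [lB])"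
    using beq_ctxt[OF beq_sym[OF brel0], of u "[lB]"] by (simp add: Dl_def)
  also have "braid_eq (u @ Dl @ [lB]) (Dl @ flipw u @ [lB])"
    using beq_ctxt[OF word_D[of u], of "[]" "[lB]"] by simp
  finally show ?thesis .
qed

lemma w4: "braid_eq (u@[lA,lB]) (inv_word Dl @ flipw u @ [la])"
proof -
  have b: "braid_eq [lA,lB,lA] [lB,lA,lB]" using beq_inv[OF brel0] by simp
  have "braid_eq (u@[lA,lB]) (u @ [lb,lB,lA,lB])"
    using beq_sym[OF cancel1[of "u" S2 True "[lA,lB]"]] by simp
  also have "braid_eq (u @ [lb,lB,lA,lB]) (u @ [lb] @ inv_word Dl)"
    using beq_ctxt[OF beq_sym[OF b], of "u@[lb]" "[]"] by (simp add: Dl_def)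
  also have "braid_eq (u @ [lb] @ inv_word Dl) (inv_word Dl @ flipw u @ [la])"
    using word_iD[of "u@[lb]"] by simp
  finally show ?thesis .
qed

lemma wc: "braid_eq (u@[(g,e),(g,\<not>e)]) u"
  using cancel1[of u g e "[]"] by simp

lemma G:
  assumes "Mp v \<or> Mm v"
  shows "\<exists>v' c'. (Mp v' \<or> Mm v') \<and>
           braid_eq (inv_word (v@[s]) @ pw c k @ v @ [s]) (inv_word v' @ pw c' k @ v')" (is "?G")
proof (cases "Mp (v@[s]) \<or> Mm (v@[s])")
  case True then show ?thesis by (intro exI[of _ "v@[s]"] exI[of _ c]) simp
next
  case False
  then have "v \<noteq> []" by (cases s; cases "fst s"; auto simp: Mp_def Mm_def)
  then obtain u t where v: "v = u@[t]" by (metis rev_exhaust)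
  have canc: "\<And>g e. t = (g,e) \<Longrightarrow> s = (g, \<not>e) \<Longrightarrow> Mp u \<or> Mm u \<Longrightarrow> ?G"
  proof -
    fix g e assume "t = (g,e)" "s = (g, \<not>e)" "Mp u \<or> Mm u"
    then show ?G using conj_eq[OF wc[of u g e], of "pw c k"] v
      by (intro exI[of _ u] exI[of _ c]) simp
  qed
  have hu: "Mp u \<or> Mm u" using assms v by (auto simp: Mp_def Mm_def)
  obtain gs es where s: "s = (gs,es)" by force
  show ?thesis
  proof (cases "Mp v")
    case True
    then have t: "t = la \<or> t = lB" and hu': "Mp u" using v by (auto simp: Mp_def)
    have "s = lA \<or> s = lb" using False True v s by (cases gs; cases es; auto simp: Mp_def)
    then show ?thesis
    proof
      assume "s = lA"
      show ?thesis using t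
      proof
        assume "t = la" then show ?thesis using canc \<open>s = lA\<close> hu by simp
      next
        assume "t = lB"
        then show ?thesis using conjiD'[OF w2[of u], of c k] Mp_flip[OF hu'] \<open>s = lA\<close> v
          by (intro exI[of _ "flipw u @ [lb]"] exI[of _ "sw c"]) (auto simp: Mm_def)
      qed
    next
      assume "s = lb"
      show ?thesis using t
      proof
        assume "t = lB" then show ?thesis using canc[of S2 False] \<open>s = lb\<close> hu by simp
      next
        assume "t = la"
        then show ?thesis using conjD'[OF w1[of u], of c k] Mp_flip[OF hu'] \<open>s = lb\<close> v
          by (intro exI[of _ "flipw u @ [lA]"] exI[of _ "sw c"]) (auto simp: Mm_def)
      qed
    qed
  next
    case False2: False
    then have Mmv: "Mm v" using assms by simp
    then have t: "t = lA \<or> t = lb" and hu': "Mm u" using v by (auto simp: Mm_def)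
    have "s = la \<or> s = lB" using False Mmv v s by (cases gs; cases es; auto simp: Mm_def)
    then show ?thesis
    proof
      assume "s = la"
      show ?thesis using t
      proof
        assume "t = lA" then show ?thesis using canc[of S1 False] \<open>s = la\<close> hu by simp
      next
        assume "t = lb"
        then show ?thesis using conjD'[OF w3[of u], of c k] Mm_flip[OF hu'] \<open>s = la\<close> v
          by (intro exI[of _ "flipw u @ [lB]"] exI[of _ "sw c"]) (auto simp: Mp_def)
      qed
    next
      assume "s = lB"
      show ?thesis using t
      proof
        assume "t = lb" then show ?thesis using canc[of S2 True] \<open>s = lB\<close> hu by simp
      next
        assume "t = lA"
        then show ?thesis using conjiD'[OF w4[of u], of c k] Mm_flip[OF hu'] \<open>s = lB\<close> v
          by (intro exI[of _ "flipw u @ [la]"] exI[of _ "sw c"]) (auto simp: Mp_def)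
      qed
    qed
  qed
qed


lemma M: "\<exists>v c. (Mp v \<or> Mm v) \<and> braid_eq (inv_word \<beta> @ pw S2 k @ \<beta>) (inv_word v @ pw c k @ v)"
proof (induction \<beta> rule: rev_induct)
  case Nil then show ?case by (intro exI[of _ "[]"] exI[of _ S2]) (simp add: Mp_def)
next
  case (snoc s \<beta>)
  then obtain v c where hv: "Mp v \<or> Mm v"
    and e: "braid_eq (inv_word \<beta> @ pw S2 k @ \<beta>) (inv_word v @ pw c k @ v)" by blast
  obtain g b where s: "s = (g,b)" by force
  have e2: "braid_eq (inv_word (\<beta>@[s]) @ pw S2 k @ \<beta> @ [s]) (inv_word (v@[s]) @ pw c k @ v @ [s])"
    using beq_ctxt[OF e, of "[(g, \<not>b)]" "[s]"] s by simp
  from G[OF hv, of s c k] obtain v' c' where "Mp v' \<or> Mm v'"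
    "braid_eq (inv_word (v@[s]) @ pw c k @ v @ [s]) (inv_word v' @ pw c' k @ v')" by blast
  then show ?case using e2 by (blast intro: beq_trans)
qed

lemma posform:
  assumes "lA \<notin> set X0" "lA \<notin> set X2" "lB \<notin> set X1"
  shows "\<exists>w. braid_eq (Dl @ Dl @ X0 @ X1 @ X2) w \<and> one_positive w"
proof -
  have "braid_eq (Dl @ Dl @ X0 @ X1 @ X2) (X0 @ Dl @ Dl @ X1 @ X2)"
    using DD_central[of X0] beq_ctxt[OF DD_central[of X0], of "[]" "X1@X2"] by simp
  also have "braid_eq (X0 @ Dl @ Dl @ X1 @ X2) (X0 @ Dl @ flipw X1 @ Dl @ X2)"
    using beq_ctxt[OF D_word[of X1], of "X0 @ Dl" X2] by simp
  finally have e: "braid_eq (Dl @ Dl @ X0 @ X1 @ X2) (X0 @ Dl @ flipw X1 @ Dl @ X2)" .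
  have sw1: "\<And>a. sw a = S1 \<longleftrightarrow> a = S2" by (case_tac a) auto
  have "lA \<notin> set (flipw X1)" 
  proof
    assume "lA \<in> set (flipw X1)"
    then obtain x where x: "x \<in> set X1" "fl x = lA" by (auto simp: flipw_def)
    obtain g e where "x = (g,e)" by force
    with x have "x = lB" by (cases g) auto
    with x assms(3) show False by simp
  qed
  moreover have "sw S2 = S1" by simp
  ultimately have "one_positive (X0 @ Dl @ flipw X1 @ Dl @ X2)"
    using assms by (auto simp: one_positive_def Dl_def)
  with e show ?thesis by blast
qed

lemma inv_letters: "lB \<notin> set (inv_word v) \<longleftrightarrow> lb \<notin> set v" "lA \<notin> set (inv_word v) \<longleftrightarrow> la \<notin> set v"
  by (auto simp: inv_word_def image_iff; force)+

lemma inv_pw: "inv_word (pw S2 k) = pw S2 (- k)"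
  by (auto simp: pw_def inv_word_def)

lemma main_pos: "\<exists>w. braid_eq (Dl @ Dl @ inv_word \<beta> @ pw S2 k @ \<beta>) w \<and> one_positive w"
proof -
  obtain v c where hv: "Mp v \<or> Mm v" and e: "braid_eq (inv_word \<beta> @ pw S2 k @ \<beta>) (inv_word v @ pw c k @ v)"
    using M by blast
  have e': "braid_eq (Dl @ Dl @ inv_word \<beta> @ pw S2 k @ \<beta>) (Dl @ Dl @ inv_word v @ pw c k @ v)"
    using beq_ctxt[OF e, of "Dl@Dl" "[]"] by simp
  have sp: "set (pw c k) \<subseteq> {(c,True),(c,False)}" by (rule set_pw)
  have "\<exists>w. braid_eq (Dl @ Dl @ inv_word v @ pw c k @ v) w \<and> one_positive w"
  proof (cases "Mp v")
    case True
    then have v: "lA \<notin> set v" "lb \<notin> set v" by (auto simp: Mp_def)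
    show ?thesis
    proof (cases c)
      case S1
      then show ?thesis using posform[of "[]" v "inv_word v @ pw c k"] v sp inv_letters by auto
    next
      case S2
      then show ?thesis using posform[of "[]" "pw c k @ v" "inv_word v"] v sp inv_letters by auto
    qed
  next
    case False
    then have v: "la \<notin> set v" "lB \<notin> set v" using hv by (auto simp: Mm_def)
    show ?thesis
    proof (cases c)
      case S1
      then show ?thesis using posform[of "inv_word v" "[]" "pw c k @ v"] v sp inv_letters by auto
    next
      case S2
      then show ?thesis using posform[of "inv_word v @ pw c k" "[]" "v"] v sp inv_letters by auto
    qed
  qed
  then show ?thesis using e' by (blast intro: beq_trans)
qed

theorem lemma28:
  fixes \<beta> :: bword and k :: int
  shows "DD_less (inv_word (Delta @ Delta)) (inv_word \<beta> @ sigma2_pow k @ \<beta>) \<and>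
         DD_less (inv_word \<beta> @ sigma2_pow k @ \<beta>) (Delta @ Delta)"
proof
  have DD: "Delta = Dl" by (simp add: Delta_def Dl_def)
  show "DD_less (inv_word (Delta @ Delta)) (inv_word \<beta> @ sigma2_pow k @ \<beta>)"
    using main_pos[of \<beta> k] by (auto simp: DD_less_def DD_pos_def DD sigma2_pw)
  obtain w where w: "braid_eq (Dl @ Dl @ inv_word \<beta> @ pw S2 (-k) @ \<beta>) w" "one_positive w"
    using main_pos[of \<beta> "-k"] by blast
  have "braid_eq ((inv_word \<beta> @ pw S2 (-k) @ \<beta>) @ Dl @ Dl) w"
    using beq_trans[OF beq_sym[OF DD_central[of "inv_word \<beta> @ pw S2 (-k) @ \<beta>"]] w(1)] by simp
  then show "DD_less (inv_word \<beta> @ sigma2_pow k @ \<beta>) (Delta @ Delta)"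
    using w(2) by (auto simp: DD_less_def DD_pos_def DD sigma2_pw inv_pw)
qed

end
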